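(* Given a closure operator $k$ on $\mathcal{L}$ such that $\mathcal{L}(p(x)) \subseteq k^*(\mathcal{L})$ for all $x$, if $k_p(\ell) \neq k_p(\jmath)$ then $k(\ell) \neq k(\jmath)$.
   Context: $\mathcal{L}$ is a security lattice (ordered by $\sqsubseteq$, with joins $\sqcup$) that also has greatest lower bounds (meets). Programs $p$ are partial functions from $\mathcal{P}(I \times \mathcal{L})$ to $\mathcal{P}(O \times \mathcal{L})$; $\mathcal{L}(x) = \{\ell \mid a^\ell \in x\}$ is the set of labels in $x$. A closure operator $k : \mathcal{L} \to \mathcal{L}$ is extensive ($\ell \sqsubseteq k(\ell)$), monotone, and idempotent; $k^*(S) = \{k(s) \mid s \in S\}$. $k_p(\ell)$ is the greatest lower bound (meet) of $\{\jmath \mid \exists x.\ \jmath \in \mathcal{L}(p(x)) \wedge \ell \sqsubseteq \jmath\}$. *)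

theory Defs
  imports Main
begin

text \<open>Labelled values: pairs (value, label). Programs are partial functions,
modelled with option.\<close>

definition labels :: "('a \<times> 'l) set \<Rightarrow> 'l set" where
  "labels x = {l. \<exists>a. (a, l) \<in> x}"

definition closure_op :: "('l::complete_lattice \<Rightarrow> 'l) \<Rightarrow> bool" where
  "closure_op k \<longleftrightarrow> (\<forall>l. l \<le> k l) \<and> mono k \<and> (\<forall>l. k (k l) = k l)"

definition kstar :: "('l \<Rightarrow> 'l) \<Rightarrow> 'l set \<Rightarrow> 'l set" where
  "kstar k S = {k s | s. s \<in> S}"

definition kp :: "(('i \<times> 'l) set \<Rightarrow> ('o \<times> 'l::complete_lattice) set option) \<Rightarrow> 'l \<Rightarrow> 'l" where
  "kp p l = Inf {j. \<exists>x y. p x = Some y \<and> j \<in> labels y \<and> l \<le> j}"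

end

theory Submission
  imports Defs
begin

theorem mainTheorem18:
  fixes k :: "'l::complete_lattice \<Rightarrow> 'l"
    and p :: "('i \<times> 'l) set \<Rightarrow> ('o \<times> 'l) set option"
  assumes "closure_op k"
    and "\<And>x y. p x = Some y \<Longrightarrow> labels y \<subseteq> kstar k UNIV"
    and "kp p l \<noteq> kp p j"
  shows "k l \<noteq> k j"
proof
  assume eq: "k l = k j"
  have ext: "\<And>a. a \<le> k a" and mo: "mono k" and idem: "\<And>a. k (k a) = k a"
    using assms(1) unfolding closure_op_def by auto
  have key: "\<And>a c. k c = c \<Longrightarrow> (a \<le> c) = (k a \<le> c)"
  proof -
    fix a c :: 'l assume c: "k c = c"
    show "(a \<le> c) = (k a \<le> c)"
    proof
      assume "a \<le> c" then have "k a \<le> k c" using mo by (simp add: monoD)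
      then show "k a \<le> c" using c by simp
    next
      assume "k a \<le> c" then show "a \<le> c" using ext order_trans by blast
    qed
  qed
  have fixk: "\<And>x y c. p x = Some y \<Longrightarrow> c \<in> labels y \<Longrightarrow> k c = c"
  proof -
    fix x y c assume "p x = Some y" "c \<in> labels y"
    then have "c \<in> kstar k UNIV" using assms(2) by blast
    then obtain s where "c = k s" unfolding kstar_def by blast
    then show "k c = c" using idem by simp
  qed
  have "{j'. \<exists>x y. p x = Some y \<and> j' \<in> labels y \<and> l \<le> j'}
      = {j'. \<exists>x y. p x = Some y \<and> j' \<in> labels y \<and> j \<le> j'}"
  proof (intro set_eqI iffI; clarsimp)
    fix x y c assume h: "p x = Some y" "c \<in> labels y" "l \<le> c"
    have "k c = c" using fixk h by blast
    then have "j \<le> c" using key h eq by metis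
    then show "\<exists>x y. p x = Some y \<and> c \<in> labels y \<and> j \<le> c" using h by blast
  next
    fix x y c assume h: "p x = Some y" "c \<in> labels y" "j \<le> c"
    have "k c = c" using fixk h by blast
    then have "l \<le> c" using key h eq by metis
    then show "\<exists>x y. p x = Some y \<and> c \<in> labels y \<and> l \<le> c" using h by blast
  qed
  then have "kp p l = kp p j" unfolding kp_def by simp
  then show False using assms(3) by simp
qed

end
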